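(* The Lagrange spectrum and the Markov spectrum of $\mathbb{Q}((1/T))$ coincide.
   Context: $\mathbb{Q}((1/T))$ is the field of formal Laurent series $\sum_{i=-\infty}^m a_iT^i$ with $a_i\in\mathbb{Q}$; for nonzero $\alpha$ with leading term $a_mT^m$ ($a_m\ne0$) set $\deg\alpha=m$, and $\deg0=-\infty$. Lagrange spectrum: for $\alpha\notin\mathbb{Q}(T)$, $l(\alpha)\in\mathbb{Z}\cup\{\infty\}$ is the supremum of integers $k$ such that $\deg(\alpha-p/q)\le-2\deg q-k$ for infinitely many $p,q\in\mathbb{Q}[T]$, $q\ne0$; $\mathbb{L}=\{l(\alpha):\alpha\in\mathbb{Q}((1/T))\setminus\mathbb{Q}(T)\}$. Markov spectrum: a binary quadratic form is $Q=AX^2+BXY+CY^2$ with $A,B,C\in\mathbb{Q}((1/T))$ not all in $\mathbb{Q}(T)$, discriminant $D=B^2-4AC$; it is indefinite if $D\ne0$ is a square in $\mathbb{Q}((1/T))$; $m(Q)=\inf\{\deg Q(X,Y):X,Y\in\mathbb{Q}[T],(X,Y)\neq(0,0)\}$; $\mathcal{M}=\{\tfrac{\deg D}{2}-m(Q): Q\text{ indefinite}\}$, with value $+\infty$ when $m(Q)=-\infty$. *)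

theory Defs
  imports "HOL-Computational_Algebra.Formal_Laurent_Series" "HOL-Library.Extended_Real"
begin

text \<open>Q((1/T)) is modelled as rat fls with X = 1/T, so T = fls_X_inv.
  The coefficient of T^i is the coefficient of X^(-i).\<close>

type_synonym lser = "rat fls"

definition polyT :: "rat poly \<Rightarrow> lser" where
  "polyT p = poly (map_poly fls_const p) fls_X_inv"

definition degL :: "lser \<Rightarrow> ereal" where
  "degL a = (if a = 0 then -\<infinity> else ereal (of_int (- fls_subdegree a)))"

definition ratfunT :: "lser set" where
  "ratfunT = {polyT p / polyT q | p q. q \<noteq> 0}"

definition lagrange_value :: "lser \<Rightarrow> ereal" where
  "lagrange_value \<alpha> = Sup {ereal (of_int k) | k::int.
     infinite {polyT p / polyT q | p q. q \<noteq> 0 \<and>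
        degL (\<alpha> - polyT p / polyT q) \<le> ereal (of_int (- 2 * int (degree q) - k))}}"

definition lagrange_spectrum :: "ereal set" where
  "lagrange_spectrum = lagrange_value ` (UNIV - ratfunT)"

definition qf_disc :: "lser \<Rightarrow> lser \<Rightarrow> lser \<Rightarrow> lser" where
  "qf_disc A B C = B^2 - 4 * A * C"

definition qf_indefinite :: "lser \<Rightarrow> lser \<Rightarrow> lser \<Rightarrow> bool" where
  "qf_indefinite A B C \<longleftrightarrow>
     \<not> (A \<in> ratfunT \<and> B \<in> ratfunT \<and> C \<in> ratfunT) \<and>
     qf_disc A B C \<noteq> 0 \<and> (\<exists>E. qf_disc A B C = E^2)"

definition qf_min :: "lser \<Rightarrow> lser \<Rightarrow> lser \<Rightarrow> ereal" where
  "qf_min A B C = Inf {degL (A * (polyT x)^2 + B * polyT x * polyT y + C * (polyT y)^2)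
     | x y :: rat poly. (x, y) \<noteq> (0, 0)}"

definition markov_spectrum :: "ereal set" where
  "markov_spectrum = {degL (qf_disc A B C) / 2 - qf_min A B C | A B C. qf_indefinite A B C}"

end

theory Submission
  imports Defs
begin


lemma polyT_0 [simp]: "polyT 0 = 0" by (simp add: polyT_def)

lemma polyT_pCons: "polyT (pCons a p) = fls_const a + fls_X_inv * polyT p"
  by (simp add: polyT_def map_poly_pCons)

lemma polyT_const [simp]: "polyT [:a:] = fls_const a"
  by (simp add: polyT_pCons)

lemma polyT_add [simp]: "polyT (p + q) = polyT p + polyT q"
proof (induction p arbitrary: q)
  case 0 then show ?case by simp
next
  case (pCons a p)
  show ?case
  proof (cases q)
    case (pCons b q')
    then show ?thesis using pCons.IH[of q']
      by (simp add: polyT_pCons fls_plus_const[symmetric] distrib_left)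
  qed
qed

lemma polyT_uminus [simp]: "polyT (- p) = - polyT p"
  by (induction p) (simp_all add: polyT_pCons algebra_simps)

lemma polyT_diff [simp]: "polyT (p - q) = polyT p - polyT q"
  using polyT_add[of p "-q"] by simp

lemma polyT_smult [simp]: "polyT (smult a p) = fls_const a * polyT p"
  by (induction p) (simp_all add: polyT_pCons algebra_simps flip: fls_const_mult_const)

lemma polyT_mult [simp]: "polyT (p * q) = polyT p * polyT q"
  by (induction p) (simp_all add: polyT_pCons algebra_simps)

lemma polyT_1 [simp]: "polyT 1 = 1"
  by (simp add: polyT_def)

lemma polyT_power [simp]: "polyT (p ^ n) = polyT p ^ n"
  by (induction n) simp_all

lemma polyT_X: "polyT [:0,1:] = fls_X_inv"
  by (simp add: polyT_pCons)

lemma polyT_nth: "fls_nth (polyT p) t = (if t \<le> 0 then coeff p (nat (-t)) else 0)"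
proof (induction p arbitrary: t)
  case 0 then show ?case by simp
next
  case (pCons a p)
  have "fls_nth (fls_X_inv * polyT p) t = fls_nth (polyT p) (t+1)"
    by (simp add: fls_X_inv_times_conv_shift)
  then show ?case using pCons.IH[of "t+1"]
    by (auto simp: polyT_pCons coeff_pCons' nat_diff_distrib' intro!: arg_cong[where f="coeff p"])
qed

lemma polyT_eq0_iff [simp]: "polyT p = 0 \<longleftrightarrow> p = 0"
proof
  assume "polyT p = 0"
  then have "\<forall>n. coeff p n = 0"
    by (metis (no_types) fls_zero_nth polyT_nth[of p "- int n" for n] nat_int neg_0_le_iff_le of_nat_0_le_iff minus_minus)
  then show "p = 0" by (simp add: poly_eqI)
qed simp

lemma polyT_subdegree: "p \<noteq> 0 \<Longrightarrow> fls_subdegree (polyT p) = - int (degree p)"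
  by (rule fls_subdegree_eqI) (auto simp: polyT_nth coeff_eq_0)

lemma polyT_subdegree_le: "p \<noteq> 0 \<Longrightarrow> fls_subdegree (polyT p) \<le> 0"
  by (simp add: polyT_subdegree)



lemma polyT_monom: "polyT (monom a i) = fls_const a * fls_X_inv ^ i"
  by (simp add: monom_altdef polyT_X)

lemma polyT_sum: "polyT (sum f A) = (\<Sum>x\<in>A. polyT (f x))"
  by (induction A rule: infinite_finite_induct) simp_all

lemma coeff_sum_monom_gen:
  "coeff (\<Sum>i\<le>N. monom (f i) i) k = (if k \<le> N then f k else 0)"
  by (simp add: coeff_sum coeff_monom)

lemma kernel_exists:
  fixes cs :: "('b \<Rightarrow> 'a::field) list"
  assumes "finite I" "length cs < card I"
  shows "\<exists>v. (\<exists>i\<in>I. v i \<noteq> 0) \<and> (\<forall>c\<in>set cs. (\<Sum>i\<in>I. c i * v i) = 0)"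
  using assms
proof (induction "length cs" arbitrary: cs I)
  case 0
  then have "I \<noteq> {}" by auto
  then show ?case using 0 by (intro exI[of _ "\<lambda>_. 1"]) auto
next
  case (Suc m cs0)
  then obtain c cs where cs0: "cs0 = c # cs" by (cases cs0) auto
  have IH: "\<And>(cs :: ('b \<Rightarrow> 'a) list) (I :: 'b set). m = length cs \<Longrightarrow> finite I \<Longrightarrow> length cs < card I \<Longrightarrow>
      \<exists>v. (\<exists>i\<in>I. v i \<noteq> 0) \<and> (\<forall>c\<in>set cs. (\<Sum>i\<in>I. c i * v i) = 0)"
    using Suc.hyps(1) by blast
  have m: "m = length cs" using Suc.hyps(2) cs0 by simp
  note prems = Suc.prems[unfolded cs0]
  show ?case
  proof (cases "\<forall>i\<in>I. c i = 0")
    case True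
    from IH[OF m prems(1)] prems(2) obtain v where
      v: "\<exists>i\<in>I. v i \<noteq> 0" "\<forall>c\<in>set cs. (\<Sum>i\<in>I. c i * v i) = 0" by auto
    show ?thesis using v True cs0 by (intro exI[of _ v]) auto
  next
    case False
    then obtain j where j: "j \<in> I" "c j \<noteq> 0" by auto
    define I' where "I' = I - {j}"
    have fI': "finite I'" using prems(1) by (simp add: I'_def)
    have cI': "card I' = card I - 1" using j prems(1) by (simp add: I'_def)
    define tr where "tr = (\<lambda>d::'b\<Rightarrow>'a. \<lambda>i. d i - d j * c i / c j)"
    have l1: "length (map tr cs) < card I'" using prems(2) cI' by simp
    have l2: "m = length (map tr cs)" using m by simp
    have "\<exists>w. (\<exists>i\<in>I'. w i \<noteq> 0) \<and> (\<forall>d\<in>set (map tr cs). (\<Sum>i\<in>I'. d i * w i) = 0)"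
      by (rule IH[OF l2 fI' l1])
    then obtain w where
      w: "\<exists>i\<in>I'. w i \<noteq> 0" "\<forall>d\<in>set (map tr cs). (\<Sum>i\<in>I'. d i * w i) = 0"
      by blast
    define v where "v = w(j := - (\<Sum>i\<in>I'. c i * w i) / c j)"
    have split: "(\<Sum>i\<in>I. d i * v i) = d j * v j + (\<Sum>i\<in>I'. d i * w i)" for d
    proof -
      have "(\<Sum>i\<in>I. d i * v i) = d j * v j + (\<Sum>i\<in>I'. d i * v i)"
        unfolding I'_def using j prems(1) by (simp add: sum.remove)
      moreover have "(\<Sum>i\<in>I'. d i * v i) = (\<Sum>i\<in>I'. d i * w i)"
        by (rule sum.cong) (auto simp: v_def I'_def)
      ultimately show ?thesis by simp
    qed
    have c0: "(\<Sum>i\<in>I. c i * v i) = 0"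
      unfolding split[of c] using j by (simp add: v_def)
    have d0: "(\<Sum>i\<in>I. d i * v i) = 0" if "d \<in> set cs" for d
    proof -
      have "(\<Sum>i\<in>I'. tr d i * w i) = 0" using w(2) that by auto
      moreover have "(\<Sum>i\<in>I'. tr d i * w i) = (\<Sum>i\<in>I'. d i * w i) - d j / c j * (\<Sum>i\<in>I'. c i * w i)"
        by (simp add: tr_def algebra_simps sum_subtractf sum_distrib_left)
      ultimately show ?thesis unfolding split[of d] using j by (simp add: v_def field_simps)
    qed
    have "\<exists>i\<in>I. v i \<noteq> 0" using w(1) by (auto simp: v_def I'_def)
    then show ?thesis using c0 d0 cs0 by (intro exI[of _ v]) auto
  qed
qed

lemma polypart_exists: "\<exists>x. \<forall>t\<le>0. fls_nth (polyT x) t = fls_nth z t"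
proof -
  define N where "N = nat (- fls_subdegree z)"
  define x where "x = (\<Sum>i\<le>N. monom (fls_nth z (- int i)) i)"
  have "fls_nth (polyT x) t = fls_nth z t" if "t \<le> 0" for t
  proof (cases "nat (-t) \<le> N")
    case True then show ?thesis using that by (simp add: polyT_nth x_def coeff_sum_monom_gen)
  next
    case False
    then have "t < fls_subdegree z" using that unfolding N_def by linarith
    then show ?thesis using False that by (simp add: polyT_nth x_def coeff_sum_monom_gen)
  qed
  then show ?thesis by blast
qed

lemma nth_polyT_mult_sum:
  "fls_nth (polyT (\<Sum>i\<le>n. monom (v i) i) * \<theta>) t = (\<Sum>i\<le>n. v i * fls_nth \<theta> (t + int i))"
  by (simp add: polyT_sum polyT_monom sum_distrib_right fls_nth_sum mult.assoc
        fls_X_inv_power_times_conv_shift fls_shifted_times_simps)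

lemma dirichlet:
  fixes \<theta> :: lser
  shows "\<exists>y x. y \<noteq> 0 \<and> degree y \<le> n \<and> (\<forall>t\<le>int n. fls_nth (polyT y * \<theta> - polyT x) t = 0)"
proof -
  define cs where "cs = map (\<lambda>t::nat. \<lambda>i::nat. fls_nth \<theta> (int t + int i)) [1..<n+1]"
  have "length cs < card {..n}" by (simp add: cs_def)
  from kernel_exists[OF _ this] obtain v where
    v: "\<exists>i\<in>{..n}. v i \<noteq> 0" "\<forall>c\<in>set cs. (\<Sum>i\<le>n. c i * v i) = 0" by auto
  define y where "y = (\<Sum>i\<le>n. monom (v i) i)"
  have "y \<noteq> 0" using v(1) coeff_sum_monom[of _ n v] unfolding y_def by (metis atMost_iff coeff_0)
  moreover have "degree y \<le> n" unfolding y_def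
    by (rule degree_le) (simp add: coeff_sum_monom_gen)
  moreover obtain x where x: "\<forall>t\<le>0. fls_nth (polyT x) t = fls_nth (polyT y * \<theta>) t"
    using polypart_exists by blast
  have "fls_nth (polyT y * \<theta> - polyT x) t = 0" if "t \<le> int n" for t
  proof (cases "t \<le> 0")
    case True then show ?thesis using x by simp
  next
    case False
    then have px: "fls_nth (polyT x) t = 0" by (simp add: polyT_nth)
    have "nat t \<in> set [1..<n+1]" using False that by auto
    then have "(\<lambda>i. fls_nth \<theta> (int (nat t) + int i)) \<in> set cs"
      unfolding cs_def set_map by (rule imageI)
    then have "(\<Sum>i\<le>n. v i * fls_nth \<theta> (t + int i)) = 0"
      using v(2) False by (auto simp: mult.commute)
    then show ?thesis using px unfolding y_def by (simp add: nth_polyT_mult_sum)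
  qed
  ultimately show ?thesis by blast
qed

lemma dirichlet2:
  fixes \<theta> :: lser
  shows "\<exists>y x. y \<noteq> 0 \<and> degree y \<le> n \<and>
     (polyT y * \<theta> - polyT x = 0 \<or> fls_subdegree (polyT y * \<theta> - polyT x) \<ge> int n + 1)"
proof -
  obtain y x where yx: "y \<noteq> 0" "degree y \<le> n" "\<forall>t\<le>int n. fls_nth (polyT y * \<theta> - polyT x) t = 0"
    using dirichlet by blast
  have "polyT y * \<theta> - polyT x = 0 \<or> fls_subdegree (polyT y * \<theta> - polyT x) \<ge> int n + 1"
    using yx(3) by (auto intro!: fls_subdegree_geI)
  then show ?thesis using yx by blast
qed



lemma neg_of_int_le: "(- real_of_int s \<le> real_of_int m) = (- s \<le> m)"
  by (metis of_int_le_iff of_int_minus)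

lemma degL_le: "degL a \<le> ereal (of_int m) \<longleftrightarrow> a = 0 \<or> - fls_subdegree a \<le> m"
  by (simp add: degL_def neg_of_int_le)

lemma degL_cases: "degL a = -\<infinity> \<or> (\<exists>m::int. degL a = ereal (of_int m))"
  by (auto simp: degL_def) (metis of_int_minus)

lemma degL_nz: "a \<noteq> 0 \<Longrightarrow> degL a = ereal (of_int (- fls_subdegree a))"
  by (simp add: degL_def)

definition specS :: "ereal set" where
  "specS = insert \<infinity> {ereal (of_int k) | k::int. k \<ge> 1}"

lemma sup_in_spec:
  assumes "P 1"
  shows "Sup {ereal (of_int k) | k::int. P k} \<in> specS"
proof -
  define A where "A = {ereal (of_int k) | k::int. P k}"
  have ge1: "Sup A \<ge> 1" using assms unfolding A_def by (intro Sup_upper2[of 1]) auto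
  show ?thesis
  proof (cases "Sup A = \<infinity>")
    case True then show ?thesis by (simp add: specS_def A_def)
  next
    case False
    then obtain r where r: "Sup A = ereal r" using ge1 by (cases "Sup A") auto
    have "ereal (r - 1) < Sup A" using r by simp
    then obtain a where a: "a \<in> A" "ereal (r - 1) < a" by (auto simp: less_Sup_iff)
    then obtain k where k: "P k" "a = ereal (of_int k)" unfolding A_def by auto
    have "j \<le> k" if "P j" for j
    proof -
      have "ereal (of_int j) \<le> Sup A" unfolding A_def using that by (intro Sup_upper) auto
      then have "of_int j \<le> r" using r by simp
      moreover have "r - 1 < of_int k" using a k by simp
      ultimately show ?thesis by linarith
    qed
    then have "Sup A \<le> ereal (of_int k)" unfolding A_def by (auto intro!: Sup_least)
    moreover have "ereal (of_int k) \<le> Sup A" unfolding A_def using k by (intro Sup_upper) auto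
    ultimately have "Sup A = ereal (of_int k)" by simp
    moreover then have "k \<ge> 1" using ge1 by simp
    ultimately show ?thesis by (auto simp: specS_def A_def)
  qed
qed

lemma sup_eq:
  assumes "P k" "\<And>j. P j \<Longrightarrow> j \<le> k"
  shows "Sup {ereal (of_int k) | k::int. P k} = ereal (of_int k)"
  using assms by (intro antisym) (auto intro!: Sup_least Sup_upper)

lemma sup_top:
  assumes "\<And>k. P k"
  shows "Sup {ereal (of_int k) | k::int. P k} = \<infinity>"
proof -
  have *: "\<exists>i\<in>{ereal (of_int k) | k::int. P k}. x < i" if "x < \<infinity>" for x
  proof (cases x)
    case (real r)
    define k where "k = \<lfloor>r\<rfloor> + 1"
    have "r < real_of_int k" unfolding k_def by linarith
    then show ?thesis using real assms by (intro bexI[of _ "ereal (of_int k)"]) auto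
  next
    case MInf
    then show ?thesis using assms by auto
  qed (use that in auto)
  have "Sup {ereal (of_int k) | k::int. P k} = top"
    by (rule Sup_eq_top_iff[THEN iffD2]) (use * in \<open>auto simp: top_ereal_def\<close>)
  then show ?thesis by (simp add: top_ereal_def)
qed

lemma inf_int:
  fixes W :: "ereal set"
  assumes "\<And>w. w \<in> W \<Longrightarrow> w = -\<infinity> \<or> (\<exists>m::int. w = ereal (of_int m))"
    and "w0 \<in> W" "w0 \<le> ereal (of_int b)"
  shows "Inf W = -\<infinity> \<or> (\<exists>m::int. m \<le> b \<and> Inf W = ereal (of_int m))"
proof (cases "Inf W = -\<infinity>")
  case False
  have le: "Inf W \<le> ereal (of_int b)" using assms(2,3) Inf_lower2 by blast
  then obtain r where r: "Inf W = ereal r" using False by (cases "Inf W") auto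
  have "Inf W < ereal (r + 1)" using r by simp
  then obtain a where a: "a \<in> W" "a < ereal (r + 1)" by (auto simp: Inf_less_iff)
  have "a \<noteq> -\<infinity>" using Inf_lower[OF a(1)] r by auto
  then obtain k where k: "a = ereal (of_int k)" using assms(1)[OF a(1)] by auto
  have "ereal (of_int k) \<le> w" if wW: "w \<in> W" for w
  proof -
    have "Inf W \<le> w" using wW by (rule Inf_lower)
    moreover have "w \<noteq> -\<infinity>" using Inf_lower[OF wW] r by auto
    ultimately obtain j where j: "w = ereal (of_int j)" "r \<le> of_int j" using assms(1)[OF wW] r by auto
    have "of_int k < r + 1" using a k by simp
    then have "k \<le> j" using j by linarith
    then show ?thesis using j by simp
  qed
  then have "ereal (of_int k) \<le> Inf W" by (rule Inf_greatest)
  moreover have "Inf W \<le> ereal (of_int k)" using a(1) k by (metis Inf_lower)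
  ultimately have "Inf W = ereal (of_int k)" by simp
  then show ?thesis using le by auto
qed simp

lemma ratfunT_iff: "a \<in> ratfunT \<longleftrightarrow> (\<exists>p q. q \<noteq> 0 \<and> a = polyT p / polyT q)"
  by (auto simp: ratfunT_def)

lemma ratfunT_I: "q \<noteq> 0 \<Longrightarrow> polyT p / polyT q \<in> ratfunT"
  by (auto simp: ratfunT_def)

lemma liouville:
  assumes "q \<noteq> 0" "s \<noteq> 0" "a = polyT p / polyT q" "a \<noteq> polyT r / polyT s"
  shows "fls_subdegree (a - polyT r / polyT s) \<le> int (degree q) + int (degree s)"
proof -
  have eq: "a - polyT r / polyT s = polyT (p * s - r * q) / polyT (q * s)"
    using assms by (simp add: field_simps)
  have nz: "p * s - r * q \<noteq> 0"
  proof
    assume "p * s - r * q = 0"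
    then have "polyT p * polyT s = polyT r * polyT q" by (simp flip: polyT_mult)
    then show False using assms by (metis frac_eq_eq polyT_eq0_iff)
  qed
  have qs: "q * s \<noteq> 0" using assms by simp
  have n1: "polyT (p * s - r * q) \<noteq> 0" by (simp only: polyT_eq0_iff) (rule nz)
  have n2: "polyT (q * s) \<noteq> 0" by (simp only: polyT_eq0_iff) (rule qs)
  have "fls_subdegree (a - polyT r / polyT s) = fls_subdegree (polyT (p * s - r * q)) - fls_subdegree (polyT (q * s))"
    unfolding eq by (rule fls_divide_subdegree[OF n1 n2])
  also have "\<dots> = - int (degree (p * s - r * q)) + int (degree (q * s))"
    by (simp only: polyT_subdegree[OF nz] polyT_subdegree[OF qs])
  also have "\<dots> \<le> int (degree q) + int (degree s)"
    using assms by (simp add: degree_mult_eq)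
  finally show ?thesis .
qed

lemma lagrange_ge1:
  assumes irr: "\<alpha> \<notin> ratfunT"
  shows "infinite {polyT p / polyT q | p q. q \<noteq> 0 \<and>
        degL (\<alpha> - polyT p / polyT q) \<le> ereal (of_int (- 2 * int (degree q) - 1))}" (is "infinite ?F")
proof
  assume fin: "finite ?F"
  have nz: "\<alpha> - r \<noteq> 0" if "r \<in> ?F" for r
    using that irr ratfunT_I by auto
  define M where "M = Max (insert 0 ((\<lambda>r. fls_subdegree (\<alpha> - r)) ` ?F))"
  have M: "fls_subdegree (\<alpha> - r) \<le> M" if "r \<in> ?F" for r
    unfolding M_def using fin that by (intro Max_ge) auto
  have M0: "0 \<le> M" unfolding M_def using fin by (intro Max_ge) auto
  obtain y x where yx: "y \<noteq> 0" "degree y \<le> nat M"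
     "polyT y * \<alpha> - polyT x = 0 \<or> fls_subdegree (polyT y * \<alpha> - polyT x) \<ge> int (nat M) + 1"
    using dirichlet2 by blast
  define z where "z = polyT y * \<alpha> - polyT x"
  have Y: "polyT y \<noteq> 0" using yx by simp
  have zz: "\<alpha> - polyT x / polyT y = z / polyT y" using Y by (simp add: z_def field_simps)
  have "z \<noteq> 0"
  proof
    assume "z = 0"
    then have "\<alpha> = polyT x / polyT y" using zz Y by simp
    then show False using irr ratfunT_I[OF yx(1)] by simp
  qed
  then have zs: "fls_subdegree z \<ge> M + 1" using yx(3) M0 by (simp add: z_def)
  have sd: "fls_subdegree (\<alpha> - polyT x / polyT y) = fls_subdegree z + int (degree y)"
    unfolding zz using \<open>z \<noteq> 0\<close> Y yx(1) by (simp add: fls_divide_subdegree polyT_subdegree)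
  have "polyT x / polyT y \<in> ?F"
  proof -
    have "degL (\<alpha> - polyT x / polyT y) \<le> ereal (of_int (- 2 * int (degree y) - 1))"
      unfolding degL_le using sd zs le_nat_iff[OF M0, of "degree y"] yx(2) M0 by simp
    then show ?thesis using yx(1) by blast
  qed
  from M[OF this] sd zs show False by simp
qed

lemma lagrange_in_spec:
  assumes "\<alpha> \<notin> ratfunT"
  shows "lagrange_value \<alpha> \<in> specS"
  unfolding lagrange_value_def
  by (rule sup_in_spec) (use lagrange_ge1[OF assms] in simp)



fun useq :: "nat \<Rightarrow> nat \<Rightarrow> rat poly" where
  "useq k 0 = 0"
| "useq k (Suc 0) = 1"
| "useq k (Suc (Suc n)) = monom 1 k * useq k (Suc n) + useq k n"

lemma useq_deg:
  assumes "k \<ge> 1"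
  shows "useq k (Suc n) \<noteq> 0 \<and> degree (useq k (Suc n)) = k * n \<and> degree (useq k n) < k * n + k"
proof (induction n)
  case 0 then show ?case using assms by simp
next
  case (Suc n)
  have m: "monom (1::rat) k \<noteq> 0" by simp
  have d1: "degree (monom 1 k * useq k (Suc n)) = k + k * n"
    using Suc m by (simp add: degree_mult_eq degree_monom_eq)
  have d: "degree (useq k (Suc (Suc n))) = k * Suc n"
    using Suc d1 by (simp add: degree_add_eq_left)
  moreover have "useq k (Suc (Suc n)) \<noteq> 0"
  proof
    assume "useq k (Suc (Suc n)) = 0"
    then have "k * Suc n = 0" using d by simp
    then show False using assms by simp
  qed
  ultimately show ?case using Suc assms by simp
qed

lemma polyT_Xk: "polyT (monom 1 k) = fls_X_inv ^ k"
  by (simp add: polyT_monom)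

context
  fixes \<beta> :: lser and k :: nat
  assumes kpos: "k \<ge> 1"
    and quad: "\<beta>^2 = fls_X_inv ^ k * \<beta> + 1"
    and sdeg: "fls_subdegree \<beta> = int k"
begin

lemma beta_nz: "\<beta> \<noteq> 0"
  using quad by auto

lemma beta_pow: "\<beta> ^ Suc n = polyT (useq k (Suc n)) * \<beta> + polyT (useq k n)"
proof (induction n rule: nat_less_induct)
  case (1 n)
  show ?case
  proof (cases n)
    case 0 then show ?thesis by simp
  next
    case (Suc m)
    have "\<beta> ^ Suc n = \<beta> * \<beta> ^ Suc m" using Suc by simp
    also have "\<dots> = \<beta> * (polyT (useq k (Suc m)) * \<beta> + polyT (useq k m))"
      using 1 Suc by simp
    also have "\<dots> = polyT (useq k (Suc m)) * \<beta>^2 + polyT (useq k m) * \<beta>"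
      by (simp add: algebra_simps power2_eq_square)
    also have "\<dots> = polyT (useq k (Suc n)) * \<beta> + polyT (useq k n)"
      unfolding quad using Suc by (simp add: polyT_Xk algebra_simps)
    finally show ?thesis .
  qed
qed

definition rfrac :: "nat \<Rightarrow> lser" where
  "rfrac n = polyT (- useq k n) / polyT (useq k (Suc n))"

lemma beta_minus_rfrac: "\<beta> - rfrac n = \<beta> ^ Suc n / polyT (useq k (Suc n))"
proof -
  have "polyT (useq k (Suc n)) \<noteq> 0" using useq_deg[OF kpos] by simp
  then show ?thesis unfolding rfrac_def beta_pow by (simp add: field_simps)
qed

lemma beta_minus_rfrac_nz: "\<beta> - rfrac n \<noteq> 0"
  unfolding beta_minus_rfrac using beta_nz useq_deg[OF kpos, of n] by simp

lemma sd_rfrac: "fls_subdegree (\<beta> - rfrac n) = int (2 * k * n + k)"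
proof -
  have u: "useq k (Suc n) \<noteq> 0" "degree (useq k (Suc n)) = k * n" using useq_deg[OF kpos, of n] by auto
  have "fls_subdegree (\<beta> - rfrac n) = fls_subdegree (\<beta> ^ Suc n) - fls_subdegree (polyT (useq k (Suc n)))"
    unfolding beta_minus_rfrac using u beta_nz by (intro fls_divide_subdegree) auto
  also have "\<dots> = int (Suc n) * int k + int (k * n)"
    using u by (simp only: fls_subdegree_pow sdeg polyT_subdegree[OF u(1)] u(2))
  finally show ?thesis by (simp add: algebra_simps)
qed

lemma beta_irr: "\<beta> \<notin> ratfunT"
proof
  assume "\<beta> \<in> ratfunT"
  then obtain p q where pq: "q \<noteq> 0" "\<beta> = polyT p / polyT q" by (auto simp: ratfunT_iff)
  define n where "n = degree q"
  have u: "useq k (Suc n) \<noteq> 0" "degree (useq k (Suc n)) = k * n" using useq_deg[OF kpos, of n] by auto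
  have "\<beta> \<noteq> polyT (- useq k n) / polyT (useq k (Suc n))"
    using beta_minus_rfrac_nz[of n] unfolding rfrac_def by (metis right_minus_eq)
  from liouville[OF pq(1) u(1) pq(2) this] have
    "fls_subdegree (\<beta> - rfrac n) \<le> int (degree q) + int (k * n)" unfolding rfrac_def u(2) .
  then have "int (2 * k * n + k) \<le> int n + int (k * n)" unfolding sd_rfrac n_def .
  then have h: "2 * k * n + k \<le> n + k * n" by (simp only: of_nat_add[symmetric] of_nat_le_iff)
  moreover have "n \<le> k * n" using kpos by simp
  moreover have "2 * k * n = k * n + k * n" by simp
  ultimately show False using kpos by linarith
qed


lemma beta_upper:
  assumes q: "q \<noteq> 0"
  shows "fls_subdegree (\<beta> - polyT p / polyT q) \<le> 2 * int (degree q) + int k"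
proof -
  define P Q where "P = polyT p" and "Q = polyT q"
  have Q0: "Q \<noteq> 0" using q by (simp add: Q_def)
  define w where "w = Q * \<beta> - P"
  define w' where "w' = Q * (fls_X_inv ^ k - \<beta>) - P"
  have w0: "w \<noteq> 0"
  proof
    assume "w = 0"
    then have "\<beta> = polyT p / polyT q" using Q0 by (simp add: w_def P_def Q_def field_simps)
    then show False using beta_irr ratfunT_I[OF q] by simp
  qed
  have w'0: "w' \<noteq> 0"
  proof
    assume "w' = 0"
    then have "\<beta> = polyT (monom 1 k * q - p) / polyT q" using Q0
      by (simp add: w'_def P_def Q_def field_simps polyT_Xk)
    then show False using beta_irr ratfunT_I[OF q, of "monom 1 k * q - p"] by simp
  qed
  have "w * w' = polyT (p^2 - monom 1 k * p * q - q^2)"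
  proof -
    have "w * w' = Q^2 * (fls_X_inv ^ k * \<beta> - \<beta>^2) - P * Q * fls_X_inv ^ k + P^2"
      by (simp add: w_def w'_def algebra_simps power2_eq_square)
    also have "\<dots> = P^2 - Q^2 - P * Q * fls_X_inv ^ k" by (simp add: quad algebra_simps)
    finally show ?thesis by (simp add: P_def Q_def polyT_Xk algebra_simps)
  qed
  moreover have "w * w' \<noteq> 0" using w0 w'0 by simp
  ultimately have "fls_subdegree (w * w') \<le> 0"
    by (metis polyT_eq0_iff polyT_subdegree_le)
  then have sum0: "fls_subdegree w + fls_subdegree w' \<le> 0" using w0 w'0 by simp
  define d where "d = Q * (fls_X_inv ^ k - 2 * \<beta>)"
  have ww': "w' = w + d" by (simp add: w_def w'_def d_def algebra_simps)
  have sd2: "fls_subdegree (2 * \<beta>) = int k"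
    using beta_nz sdeg by (simp add: fls_subdegree_mult)
  have "fls_subdegree (fls_X_inv ^ k - 2 * \<beta>) = - int k"
    using sd2 kpos by (subst fls_subdegree_diff_eq1) auto
  moreover have "fls_X_inv ^ k - 2 * \<beta> \<noteq> 0"
  proof
    assume "fls_X_inv ^ k - 2 * \<beta> = 0"
    then have "fls_X_inv ^ k = (2 * \<beta> :: lser)" by simp
    then have "- int k = int k" using sd2 by (metis fls_subdegree_fls_X_inv_pow)
    then show False using kpos by simp
  qed
  ultimately have sdd: "fls_subdegree d = - int (degree q) - int k" "d \<noteq> 0"
    using Q0 q by (simp_all add: d_def Q_def polyT_subdegree)
  have sw: "fls_subdegree w \<le> int (degree q) + int k"
  proof (cases "fls_subdegree w \<le> - int (degree q) - int k")
    case True then show ?thesis by linarith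
  next
    case False
    then have "fls_subdegree w' = fls_subdegree d" unfolding ww'
      using sdd by (intro fls_subdegree_add_eq2) auto
    then show ?thesis using sum0 sdd by linarith
  qed
  have "\<beta> - polyT p / polyT q = w / Q" using Q0 by (simp add: w_def P_def Q_def field_simps)
  then have "fls_subdegree (\<beta> - polyT p / polyT q) = fls_subdegree w - fls_subdegree Q"
    using w0 Q0 by (simp add: fls_divide_subdegree)
  then show ?thesis using sw q by (simp add: Q_def polyT_subdegree)
qed

lemma beta_lagrange: "lagrange_value \<beta> = ereal (of_int (int k))"
  unfolding lagrange_value_def
proof (rule sup_eq)
  let ?S = "\<lambda>j. {polyT p / polyT q | p q. q \<noteq> 0 \<and>
        degL (\<beta> - polyT p / polyT q) \<le> ereal (of_int (- 2 * int (degree q) - j))}"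
  have "rfrac n \<in> ?S (int k)" for n
  proof -
    have u: "useq k (Suc n) \<noteq> 0" "degree (useq k (Suc n)) = k * n" using useq_deg[OF kpos, of n] by auto
    have "degL (\<beta> - rfrac n) \<le> ereal (of_int (- 2 * int (degree (useq k (Suc n))) - int k))"
      unfolding degL_le sd_rfrac u(2) by (simp add: algebra_simps)
    then show ?thesis unfolding rfrac_def using u(1) by blast
  qed
  then have sub: "range rfrac \<subseteq> ?S (int k)" by auto
  have "inj rfrac"
  proof (rule injI)
    fix m n assume "rfrac m = rfrac n"
    then have "fls_subdegree (\<beta> - rfrac m) = fls_subdegree (\<beta> - rfrac n)" by simp
    then have "int (2 * k * m + k) = int (2 * k * n + k)" unfolding sd_rfrac .
    then have "2 * k * m + k = 2 * k * n + k" by (simp only: of_nat_eq_iff)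
    then show "m = n" using kpos by simp
  qed
  then have "infinite (range rfrac)" by (simp add: range_inj_infinite)
  then show "infinite (?S (int k))" using sub finite_subset by blast
next
  fix j
  assume inf: "infinite {polyT p / polyT q | p q. q \<noteq> 0 \<and>
        degL (\<beta> - polyT p / polyT q) \<le> ereal (of_int (- 2 * int (degree q) - j))}"
  show "j \<le> int k"
  proof (rule ccontr)
    assume jk: "\<not> j \<le> int k"
    have F: False if q: "q \<noteq> 0" and le: "degL (\<beta> - polyT p / polyT q) \<le> ereal (of_int (- 2 * int (degree q) - j))"
      for p q :: "rat poly"
    proof -
      have "\<beta> - polyT p / polyT q \<noteq> 0" using beta_irr ratfunT_I[OF q] by auto
      then have "fls_subdegree (\<beta> - polyT p / polyT q) \<ge> 2 * int (degree q) + j"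
        using le unfolding degL_le by simp
      then show False using beta_upper[OF q, of p] jk by simp
    qed
    have "{polyT p / polyT q | p q. q \<noteq> 0 \<and>
        degL (\<beta> - polyT p / polyT q) \<le> ereal (of_int (- 2 * int (degree q) - j))} = {}"
      using F by blast
    then show False using inf by (metis finite.emptyI)
  qed
qed

lemma beta_markov: "qf_indefinite \<beta> (- (fls_X_inv ^ k * \<beta>)) (- \<beta>) \<and>
   degL (qf_disc \<beta> (- (fls_X_inv ^ k * \<beta>)) (- \<beta>)) / 2 - qf_min \<beta> (- (fls_X_inv ^ k * \<beta>)) (- \<beta>)
     = ereal (of_int (int k))"
proof -
  define E where "E = \<beta> * (fls_X_inv ^ k - 2 * \<beta>)"
  have disc: "qf_disc \<beta> (- (fls_X_inv ^ k * \<beta>)) (- \<beta>) = E ^ 2"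
  proof -
    define T where "T = (fls_X_inv ^ k :: lser)"
    have q': "\<beta>^2 = T * \<beta> + 1" using quad by (simp add: T_def)
    have "E^2 = \<beta>^2 * (T * T - 4 * T * \<beta> + 4 * \<beta>^2)"
      unfolding E_def T_def[symmetric] by (simp add: power2_eq_square algebra_simps)
    also have "\<dots> = \<beta>^2 * (T * T + 4)" unfolding q' by (simp add: algebra_simps)
    also have "\<dots> = (- (T * \<beta>))^2 - 4 * \<beta> * (- \<beta>)" by (simp add: power2_eq_square algebra_simps)
    finally show ?thesis unfolding qf_disc_def T_def by simp
  qed
  have sd2: "fls_subdegree (2 * \<beta>) = int k"
    using beta_nz sdeg by (simp add: fls_subdegree_mult)
  have Tk: "fls_X_inv ^ k - 2 * \<beta> \<noteq> 0 \<and> fls_subdegree (fls_X_inv ^ k - 2 * \<beta>) = - int k"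
  proof -
    have a: "fls_subdegree (fls_X_inv ^ k - 2 * \<beta>) = - int k"
      using sd2 kpos by (subst fls_subdegree_diff_eq1) auto
    moreover have "fls_X_inv ^ k - 2 * \<beta> \<noteq> 0"
    proof
      assume "fls_X_inv ^ k - 2 * \<beta> = 0"
      then have "fls_X_inv ^ k = (2 * \<beta> :: lser)" by simp
      then have "- int k = int k" using sd2 by (metis fls_subdegree_fls_X_inv_pow)
      then show False using kpos by simp
    qed
    ultimately show ?thesis by simp
  qed
  have E0: "E \<noteq> 0" and sdE: "fls_subdegree E = 0"
    using Tk beta_nz sdeg by (simp_all add: E_def)
  have degD: "degL (qf_disc \<beta> (- (fls_X_inv ^ k * \<beta>)) (- \<beta>)) = 0"
    unfolding disc using E0 sdE by (simp add: degL_def fls_subdegree_pow)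
  have indef: "qf_indefinite \<beta> (- (fls_X_inv ^ k * \<beta>)) (- \<beta>)"
    unfolding qf_indefinite_def using beta_irr disc E0 by auto
  define W where "W = {degL (\<beta> * (polyT x)^2 + (- (fls_X_inv ^ k * \<beta>)) * polyT x * polyT y + (- \<beta>) * (polyT y)^2)
     | x y :: rat poly. (x, y) \<noteq> (0, 0)}"
  have low: "ereal (of_int (- int k)) \<le> w" if "w \<in> W" for w
  proof -
    have "\<exists>x y. w = degL (\<beta> * (polyT x)^2 + (- (fls_X_inv ^ k * \<beta>)) * polyT x * polyT y + (- \<beta>) * (polyT y)^2) \<and> (x, y) \<noteq> (0, 0)"
      using that unfolding W_def by (simp only: mem_Collect_eq)
    then obtain x y :: "rat poly" where xy: 
      "w = degL (\<beta> * (polyT x)^2 + (- (fls_X_inv ^ k * \<beta>)) * polyT x * polyT y + (- \<beta>) * (polyT y)^2)"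
      "(x, y) \<noteq> (0, 0)"
      by (elim exE conjE)
    define N where "N = x^2 - monom 1 k * x * y - y^2"
    have eqN: "\<beta> * (polyT x)^2 + (- (fls_X_inv ^ k * \<beta>)) * polyT x * polyT y + (- \<beta>) * (polyT y)^2
       = \<beta> * polyT N"
      by (simp add: N_def polyT_Xk algebra_simps)
    have fac: "polyT N = (polyT x - \<beta> * polyT y) * (polyT x - (fls_X_inv ^ k - \<beta>) * polyT y)"
    proof -
      have "(polyT x - \<beta> * polyT y) * (polyT x - (fls_X_inv ^ k - \<beta>) * polyT y)
         = (polyT x)^2 - fls_X_inv ^ k * polyT x * polyT y + (fls_X_inv ^ k * \<beta> - \<beta>^2) * (polyT y)^2"
        by (simp add: algebra_simps power2_eq_square)
      also have "\<dots> = polyT N" by (simp add: quad N_def polyT_Xk algebra_simps)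
      finally show ?thesis by simp
    qed
    have "N \<noteq> 0"
    proof (cases "y = 0")
      case True then show ?thesis using xy(2) by (simp add: N_def)
    next
      case False
      have Y: "polyT y \<noteq> 0" using False by simp
      have f1: "polyT x - \<beta> * polyT y \<noteq> 0"
      proof
        assume "polyT x - \<beta> * polyT y = 0"
        then have "\<beta> = polyT x / polyT y" using Y by (simp add: field_simps)
        then show False using beta_irr ratfunT_I[OF False] by simp
      qed
      have f2: "polyT x - (fls_X_inv ^ k - \<beta>) * polyT y \<noteq> 0"
      proof
        assume "polyT x - (fls_X_inv ^ k - \<beta>) * polyT y = 0"
        then have "\<beta> = polyT (monom 1 k * y - x) / polyT y" using Y by (simp add: field_simps polyT_Xk)
        then show False using beta_irr ratfunT_I[OF False, of "monom 1 k * y - x"] by simp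
      qed
      have "polyT N \<noteq> 0" using f1 f2 fac by simp
      then show ?thesis by simp
    qed
    then have "w = ereal (of_int (- int k + int (degree N)))"
      unfolding xy(1) eqN using beta_nz by (simp add: degL_nz polyT_subdegree sdeg)
    then show ?thesis by simp
  qed
  have "degL \<beta> \<in> W" unfolding W_def by (intro CollectI exI[of _ 1] exI[of _ 0]) simp
  moreover have "degL \<beta> = ereal (of_int (- int k))" using beta_nz sdeg by (simp add: degL_nz)
  ultimately have "Inf W = ereal (of_int (- int k))"
    using low by (intro antisym Inf_greatest) (auto intro: Inf_lower2)
  then have "qf_min \<beta> (- (fls_X_inv ^ k * \<beta>)) (- \<beta>) = ereal (of_int (- int k))"
    unfolding qf_min_def W_def .
  then show ?thesis using indef degD by simp
qed

end



lemma beta_exists: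
  assumes k: "k \<ge> 1"
  shows "\<exists>\<beta>::lser. \<beta>^2 = fls_X_inv ^ k * \<beta> + 1 \<and> fls_subdegree \<beta> = int k"
proof -
  define a :: "rat fps" where "a = 1 + 4 * fps_X ^ (2 * k)"
  have a0: "a $ 0 = 1" using k by (simp add: a_def)
  define s where "s = fps_radical (\<lambda>_ _. 1) (Suc 1) a"
  have s2: "s ^ Suc 1 = a"
    using power_radical[of a "\<lambda>_ _. 1" 1] a0 unfolding s_def by simp
  have s0: "s $ 0 = 1" by (simp add: s_def)
  define S where "S = fps_to_fls s"
  define T where "T = (fls_X_inv ^ k :: lser)"
  define Y where "Y = (fls_X ^ k :: lser)"
  define h where "h = (fls_const (1/2) :: lser)"
  have S2: "S^2 = 1 + 4 * Y^2"
  proof -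
    have "S^2 = fps_to_fls a" using s2 by (simp add: S_def power2_eq_square fls_times_fps_to_fls[symmetric])
    also have "\<dots> = 1 + 4 * fls_X ^ (2 * k)"
      by (simp add: a_def fls_times_fps_to_fls fps_to_fls_power)
    finally show ?thesis by (simp add: Y_def power_mult[symmetric] mult.commute)
  qed
  have TY: "T * Y = 1"
    by (simp add: T_def Y_def fls_X_inv_power_times_conv_shift fls_X_power_conv_shift_1)
  have h2: "2 * h = 1" unfolding h_def fls_const_numeral[symmetric] fls_const_mult_const by simp
  define \<beta> where "\<beta> = T * ((1 - S) * h)"
  have quad: "\<beta>^2 = T * \<beta> + 1"
    unfolding \<beta>_def using S2 TY h2 by algebra
  have bnz: "\<beta> \<noteq> 0" using quad by auto
  have g0: "(1 - S) * h \<noteq> 0" using bnz by (auto simp: \<beta>_def)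
  have g1: "fls_subdegree ((1 - S) * h) \<ge> 1"
  proof (rule fls_subdegree_geI[OF g0])
    fix j :: int assume "j < 1"
    then show "fls_nth ((1 - S) * h) j = 0"
      using s0 by (cases "j = 0") (simp_all add: h_def S_def)
  qed
  have T0: "T \<noteq> 0" and sT: "fls_subdegree T = - int k" by (simp_all add: T_def)
  have sb: "fls_subdegree \<beta> \<ge> 1 - int k"
    using g1 g0 T0 sT by (simp add: \<beta>_def)
  have prod: "\<beta> * (\<beta> - T) = 1" using quad by (simp add: power2_eq_square algebra_simps)
  have bT: "\<beta> - T \<noteq> 0" using prod by auto
  have "fls_subdegree (\<beta> - T) = - int k"
    using sb sT T0 by (subst fls_subdegree_diff_eq2) auto
  moreover have "fls_subdegree \<beta> + fls_subdegree (\<beta> - T) = 0"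
    using prod bnz bT fls_subdegree_mult[OF bnz bT] by simp
  ultimately have "fls_subdegree \<beta> = int k" by simp
  then show ?thesis using quad unfolding T_def by blast
qed



definition alphaInf :: lser where
  "alphaInf = fps_to_fls (Abs_fps (\<lambda>i. if \<exists>n. i = 3 ^ n then 1 else 0))"

lemma alphaInf_nth: "fls_nth alphaInf t = (if t < 0 then 0 else if \<exists>n. nat t = 3 ^ n then 1 else 0)"
  by (simp add: alphaInf_def)

lemma not_pow3: "3 ^ N < (m::nat) \<Longrightarrow> m < 3 ^ Suc N \<Longrightarrow> m \<noteq> 3 ^ n"
proof
  assume a: "3 ^ N < m" "m < 3 ^ Suc N" "m = 3 ^ n"
  show False
  proof (cases "n \<le> N")
    case True
    then have "(3::nat) ^ n \<le> 3 ^ N" by (intro power_increasing) auto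
    then show False using a by simp
  next
    case False
    then have "(3::nat) ^ Suc N \<le> 3 ^ n" by (intro power_increasing) auto
    then show False using a by simp
  qed
qed

lemma alphaInf_approx:
  "\<exists>x. alphaInf - polyT x / polyT (monom 1 (3 ^ N)) \<noteq> 0 \<and>
       fls_subdegree (alphaInf - polyT x / polyT (monom 1 (3 ^ N))) = int (3 ^ Suc N)"
proof -
  define e :: nat where "e = 3 ^ N"
  define q :: "rat poly" where "q = monom 1 e"
  define z where "z = polyT q * alphaInf"
  have zn: "fls_nth z t = fls_nth alphaInf (t + int e)" for t
    by (simp add: z_def q_def polyT_Xk fls_X_inv_power_times_conv_shift)
  obtain x where x: "\<forall>t\<le>0. fls_nth (polyT x) t = fls_nth z t" using polypart_exists by blast
  define w where "w = z - polyT x"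
  have wn: "fls_nth w t = (if t \<le> 0 then 0 else fls_nth alphaInf (t + int e))" for t
    using x zn by (simp add: w_def polyT_nth)
  have e0: "e > 0" by (simp add: e_def)
  have w2e: "fls_nth w (2 * int e) = 1"
  proof -
    have "2 * int e + int e = int (3 ^ Suc N)" by (simp add: e_def)
    then have "nat (2 * int e + int e) = 3 ^ Suc N" by (simp only: nat_int)
    then show ?thesis using e0 by (auto simp: wn alphaInf_nth intro: exI[of _ "Suc N"])
  qed
  have wlow: "fls_nth w t = 0" if "t < 2 * int e" for t
  proof (cases "t \<le> 0")
    case False
    have "nat (t + int e) \<noteq> 3 ^ n" for n
    proof (rule not_pow3[of N])
      show "3 ^ N < nat (t + int e)" using False by (simp add: zless_nat_eq_int_zless e_def)
      have "t + int e < int (3 ^ Suc N)" using that by (simp add: e_def)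
      then show "nat (t + int e) < 3 ^ Suc N" using False by (simp add: nat_less_iff)
    qed
    then show ?thesis using False by (simp add: wn alphaInf_nth)
  qed (simp add: wn)
  have w0: "w \<noteq> 0" using w2e by auto
  have sw: "fls_subdegree w = 2 * int e"
    by (rule fls_subdegree_eqI) (use w2e wlow in auto)
  have Q0: "polyT q \<noteq> 0" by (simp add: q_def)
  have sQ: "fls_subdegree (polyT q) = - int e" by (simp add: q_def polyT_Xk)
  have eq: "alphaInf - polyT x / polyT q = w / polyT q"
    using Q0 by (simp add: w_def z_def field_simps)
  have "fls_subdegree (alphaInf - polyT x / polyT q) = 3 * int e"
    unfolding eq using w0 Q0 sw sQ by (simp add: fls_divide_subdegree)
  moreover have "alphaInf - polyT x / polyT q \<noteq> 0" unfolding eq using w0 Q0 by simp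
  ultimately show ?thesis unfolding q_def e_def by auto
qed

definition xInf :: "nat \<Rightarrow> rat poly" where
  "xInf N = (SOME x. alphaInf - polyT x / polyT (monom 1 (3 ^ N)) \<noteq> 0 \<and>
       fls_subdegree (alphaInf - polyT x / polyT (monom 1 (3 ^ N))) = int (3 ^ Suc N))"

definition rInf :: "nat \<Rightarrow> lser" where
  "rInf N = polyT (xInf N) / polyT (monom 1 (3 ^ N))"

lemma rInf: "alphaInf - rInf N \<noteq> 0" "fls_subdegree (alphaInf - rInf N) = int (3 ^ Suc N)"
  using someI_ex[OF alphaInf_approx[of N]] unfolding rInf_def xInf_def by auto

lemma alphaInf_irr: "alphaInf \<notin> ratfunT"
proof
  assume "alphaInf \<in> ratfunT"
  then obtain p q where pq: "q \<noteq> 0" "alphaInf = polyT p / polyT q" by (auto simp: ratfunT_iff)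
  define N where "N = degree q"
  have m0: "monom (1::rat) (3 ^ N) \<noteq> 0" by simp
  have "alphaInf \<noteq> polyT (xInf N) / polyT (monom 1 (3 ^ N))"
    using rInf(1)[of N] unfolding rInf_def by (metis right_minus_eq)
  from liouville[OF pq(1) m0 pq(2) this]
  have "int (3 ^ Suc N) \<le> int (degree q) + int (3 ^ N)"
    using rInf(2)[of N] unfolding rInf_def by (simp add: degree_monom_eq)
  then have "3 ^ Suc N \<le> N + 3 ^ N" unfolding N_def by (simp only: of_nat_add[symmetric] of_nat_le_iff)
  moreover have "N < 3 ^ N" by (induction N) auto
  ultimately show False by simp
qed

lemma alphaInf_lagrange: "lagrange_value alphaInf = \<infinity>"
  unfolding lagrange_value_def
proof (rule sup_top)
  fix j :: int
  let ?S = "{polyT p / polyT q | p q. q \<noteq> 0 \<and>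
        degL (alphaInf - polyT p / polyT q) \<le> ereal (of_int (- 2 * int (degree q) - j))}"
  define M where "M = nat j"
  have "rInf (N + M) \<in> ?S" for N
  proof -
    have "j \<le> int (3 ^ (N + M))"
    proof -
      have "M < 3 ^ M" by (induction M) auto
      moreover have "(3::nat) ^ M \<le> 3 ^ (N + M)" by (intro power_increasing) auto
      ultimately show ?thesis unfolding M_def by linarith
    qed
    then have "degL (alphaInf - rInf (N + M)) \<le> ereal (of_int (- 2 * int (degree (monom (1::rat) (3 ^ (N + M)))) - j))"
      unfolding degL_le using rInf(2)[of "N + M"] by (simp add: degree_monom_eq)
    then show ?thesis unfolding rInf_def by (intro CollectI exI[of _ "xInf (N + M)"] exI[of _ "monom 1 (3 ^ (N + M))"]) simp
  qed
  then have sub: "range (\<lambda>N. rInf (N + M)) \<subseteq> ?S" by auto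
  have "inj (\<lambda>N. rInf (N + M))"
  proof (rule injI)
    fix a b assume "rInf (a + M) = rInf (b + M)"
    then have "fls_subdegree (alphaInf - rInf (a + M)) = fls_subdegree (alphaInf - rInf (b + M))" by simp
    then have "int (3 ^ Suc (a + M)) = int (3 ^ Suc (b + M))" unfolding rInf(2) .
    then have "(3::nat) ^ Suc (a + M) = 3 ^ Suc (b + M)" by (simp only: of_nat_eq_iff)
    then show "a = b" by (simp add: power_inject_exp)
  qed
  then have "infinite (range (\<lambda>N. rInf (N + M)))" by (simp add: range_inj_infinite)
  then show "infinite ?S" using sub finite_subset by blast
qed



lemma markov_in_spec:
  assumes ind: "qf_indefinite A B C"
  shows "degL (qf_disc A B C) / 2 - qf_min A B C \<in> specS"
proof -
  obtain E where DE: "qf_disc A B C = E^2" and D0: "qf_disc A B C \<noteq> 0"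
    using ind unfolding qf_indefinite_def by blast
  have E0: "E \<noteq> 0" using D0 DE by auto
  have degD: "degL (qf_disc A B C) / 2 = ereal (of_int (- fls_subdegree E))"
    unfolding DE using E0 by (simp add: degL_def fls_subdegree_pow)
  define W where "W = {degL (A * (polyT x)^2 + B * polyT x * polyT y + C * (polyT y)^2)
     | x y :: rat poly. (x, y) \<noteq> (0, 0)}"
  have qm: "qf_min A B C = Inf W" unfolding qf_min_def W_def ..
  have Wint: "\<And>w. w \<in> W \<Longrightarrow> w = -\<infinity> \<or> (\<exists>m::int. w = ereal (of_int m))"
    unfolding W_def using degL_cases by blast
  have mem: "degL (A * (polyT x)^2 + B * polyT x * polyT y + C * (polyT y)^2) \<in> W"
    if "(x, y) \<noteq> (0, 0)" for x y unfolding W_def using that by blast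
  have goal: "ereal (of_int (- fls_subdegree E)) - Inf W \<in> specS"
    if "\<exists>w\<in>W. w \<le> ereal (of_int (- fls_subdegree E - 1))"
  proof -
    from that obtain w0 where "w0 \<in> W" "w0 \<le> ereal (of_int (- fls_subdegree E - 1))" by blast
    from inf_int[OF Wint this]
    show ?thesis
    proof
      assume "Inf W = -\<infinity>" then show ?thesis by (simp add: specS_def)
    next
      assume "\<exists>m::int. m \<le> - fls_subdegree E - 1 \<and> Inf W = ereal (of_int m)"
      then obtain m where m: "m \<le> - fls_subdegree E - 1" "Inf W = ereal (of_int m)" by blast
      have "ereal (of_int (- fls_subdegree E)) - Inf W = ereal (of_int (- fls_subdegree E - m))"
        using m by simp
      then show ?thesis using m(1) unfolding specS_def by (auto intro!: exI[of _ "- fls_subdegree E - m"])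
    qed
  qed
  have "\<exists>w\<in>W. w \<le> ereal (of_int (- fls_subdegree E - 1))"
  proof (cases "A = 0")
    case True
    have "degL (A * (polyT 1)^2 + B * polyT 1 * polyT 0 + C * (polyT 0)^2) = -\<infinity>"
      using True by (simp add: degL_def)
    moreover have "degL (A * (polyT 1)^2 + B * polyT 1 * polyT 0 + C * (polyT 0)^2) \<in> W"
      by (rule mem) simp
    ultimately show ?thesis by (intro bexI[of _ "-\<infinity>"]) simp_all
  next
    case A0: False
    define \<theta> where "\<theta> = (E - B) / (2 * A)"
    have th: "2 * A * \<theta> = E - B" using A0 by (simp add: \<theta>_def)
    have E2: "E^2 = B^2 - 4 * A * C" using DE by (simp add: qf_disc_def)
    have "A * (A * \<theta>^2 + B * \<theta> + C) = 0" using th E2 by algebra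
    then have root: "A * \<theta>^2 + B * \<theta> + C = 0" using A0 by simp
    define n where "n = nat (fls_subdegree E - fls_subdegree A)"
    obtain y x where yx: "y \<noteq> 0" "degree y \<le> n"
      "polyT y * \<theta> - polyT x = 0 \<or> fls_subdegree (polyT y * \<theta> - polyT x) \<ge> int n + 1"
      using dirichlet2 by blast
    define z where "z = polyT y * \<theta> - polyT x"
    define Qv where "Qv = A * (polyT x)^2 + B * polyT x * polyT y + C * (polyT y)^2"
    have Qz: "Qv = A * z^2 - E * polyT y * z"
    proof -
      have X: "polyT x = polyT y * \<theta> - z" by (simp add: z_def)
      show ?thesis unfolding Qv_def X using root th by algebra
    qed
    have inW: "Qv \<in> {Qv} \<and> degL Qv \<in> W" using mem[of x y] yx(1) by (simp add: Qv_def)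
    show ?thesis
    proof (cases "Qv = 0")
      case True
      then show ?thesis using inW by (intro bexI[of _ "degL Qv"]) (auto simp: degL_def)
    next
      case Q0: False
      then have z0: "z \<noteq> 0" using Qz by auto
      then have sz: "fls_subdegree z \<ge> int n + 1" using yx(3) by (simp add: z_def)
      have Y0: "polyT y \<noteq> 0" using yx(1) by simp
      have sY: "fls_subdegree (polyT y) \<ge> - int n"
        using yx(1,2) by (simp add: polyT_subdegree)
      have n1: "2 * int n \<ge> fls_subdegree E - fls_subdegree A - 1" unfolding n_def by linarith
      have s1: "fls_subdegree (A * z^2) \<ge> fls_subdegree E + 1"
        using A0 z0 sz n1 by (simp add: fls_subdegree_pow)
      have s2: "fls_subdegree (- (E * polyT y * z)) \<ge> fls_subdegree E + 1"
        using E0 Y0 z0 sz sY by simp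
      have "Qv = A * z^2 + - (E * polyT y * z)" using Qz by simp
      then have "fls_subdegree Qv \<ge> min (fls_subdegree (A * z^2)) (fls_subdegree (- (E * polyT y * z)))"
        using Q0 fls_plus_subdegree by metis
      then have "fls_subdegree Qv \<ge> fls_subdegree E + 1" using s1 s2 by linarith
      then have "degL Qv \<le> ereal (of_int (- fls_subdegree E - 1))"
        unfolding degL_le by simp
      then show ?thesis using inW by blast
    qed
  qed
  then show ?thesis using goal degD qm by simp
qed

lemma markov_inf:
  assumes irr: "\<beta> \<notin> ratfunT"
  shows "qf_indefinite 0 1 \<beta> \<and> degL (qf_disc 0 1 \<beta>) / 2 - qf_min 0 1 \<beta> = \<infinity>"
proof -
  have d: "qf_disc 0 1 \<beta> = 1" by (simp add: qf_disc_def)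
  have e: "\<exists>E. (1::lser) = E^2" by (rule exI[of _ 1]) simp
  have ind: "qf_indefinite 0 1 \<beta>" unfolding qf_indefinite_def d using irr e by simp
  define W where "W = {degL (0 * (polyT x)^2 + 1 * polyT x * polyT y + \<beta> * (polyT y)^2) | x y :: rat poly. (x, y) \<noteq> (0, 0)}"
  have "degL (0 * (polyT 1)^2 + 1 * polyT 1 * polyT 0 + \<beta> * (polyT 0)^2) \<in> W"
    unfolding W_def by (intro CollectI exI[of _ "1::rat poly"] exI[of _ "0::rat poly"]) simp
  moreover have "degL (0 * (polyT 1)^2 + 1 * polyT 1 * polyT 0 + \<beta> * (polyT 0)^2) = -\<infinity>"
    by (simp add: degL_def)
  ultimately have "Inf W \<le> -\<infinity>" by (metis Inf_lower)
  then have "qf_min 0 1 \<beta> = -\<infinity>" unfolding qf_min_def W_def by simp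
  moreover have "degL (qf_disc 0 1 \<beta>) = 0" by (simp add: d degL_def)
  ultimately show ?thesis using ind by simp
qed


theorem corollary4:
  shows "lagrange_spectrum = markov_spectrum"
proof -
  have L: "lagrange_spectrum = specS"
  proof
    show "lagrange_spectrum \<subseteq> specS"
    proof
      fix v assume "v \<in> lagrange_spectrum"
      then obtain \<alpha> where "\<alpha> \<notin> ratfunT" "v = lagrange_value \<alpha>"
        unfolding lagrange_spectrum_def by blast
      then show "v \<in> specS" using lagrange_in_spec by simp
    qed
  next
    show "specS \<subseteq> lagrange_spectrum"
    proof
      fix v assume "v \<in> specS"
      then consider "v = \<infinity>" | k :: int where "k \<ge> 1" "v = ereal (of_int k)"
        unfolding specS_def by blast
      then show "v \<in> lagrange_spectrum"
      proof cases
        case 1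
        have "alphaInf \<in> UNIV - ratfunT" using alphaInf_irr by simp
        then have "lagrange_value alphaInf \<in> lagrange_spectrum"
          unfolding lagrange_spectrum_def by (rule imageI)
        then show ?thesis using 1 alphaInf_lagrange by simp
      next
        case (2 k)
        then have kk: "nat k \<ge> 1" by simp
        obtain \<beta> :: lser where b: "\<beta>^2 = fls_X_inv ^ nat k * \<beta> + 1" "fls_subdegree \<beta> = int (nat k)"
          using beta_exists[OF kk] by blast
        have "\<beta> \<in> UNIV - ratfunT" using beta_irr[OF kk b] by simp
        then have "lagrange_value \<beta> \<in> lagrange_spectrum"
          unfolding lagrange_spectrum_def by (rule imageI)
        moreover have "lagrange_value \<beta> = v" using beta_lagrange[OF kk b] 2 by simp
        ultimately show ?thesis by simp
      qed
    qed
  qed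
  have M: "markov_spectrum = specS"
  proof
    show "markov_spectrum \<subseteq> specS"
    proof
      fix v assume "v \<in> markov_spectrum"
      then have "\<exists>A B C. v = degL (qf_disc A B C) / 2 - qf_min A B C \<and> qf_indefinite A B C"
        unfolding markov_spectrum_def by (simp only: mem_Collect_eq)
      then obtain A B C where "v = degL (qf_disc A B C) / 2 - qf_min A B C" "qf_indefinite A B C"
        by (elim exE conjE)
      then show "v \<in> specS" using markov_in_spec by simp
    qed
  next
    show "specS \<subseteq> markov_spectrum"
    proof
      fix v assume "v \<in> specS"
      then consider "v = \<infinity>" | k :: int where "k \<ge> 1" "v = ereal (of_int k)"
        unfolding specS_def by blast
      then show "v \<in> markov_spectrum"
      proof cases
        case 1
        obtain \<beta> :: lser where b: "\<beta>^2 = fls_X_inv ^ 1 * \<beta> + 1" "fls_subdegree \<beta> = int 1"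
          using beta_exists[of 1] by auto
        have "\<beta> \<notin> ratfunT" using beta_irr[of 1 \<beta>] b by simp
        from markov_inf[OF this] have
          "qf_indefinite 0 1 \<beta>" "v = degL (qf_disc 0 1 \<beta>) / 2 - qf_min 0 1 \<beta>"
          using 1 by simp_all
        then show ?thesis unfolding markov_spectrum_def
          by (intro CollectI exI[of _ 0] exI[of _ 1] exI[of _ \<beta>]) simp
      next
        case (2 k)
        then have kk: "nat k \<ge> 1" by simp
        obtain \<beta> :: lser where b: "\<beta>^2 = fls_X_inv ^ nat k * \<beta> + 1" "fls_subdegree \<beta> = int (nat k)"
          using beta_exists[OF kk] by blast
        from beta_markov[OF kk b] 2 have
          "qf_indefinite \<beta> (- (fls_X_inv ^ nat k * \<beta>)) (- \<beta>)"
          "v = degL (qf_disc \<beta> (- (fls_X_inv ^ nat k * \<beta>)) (- \<beta>)) / 2 - qf_min \<beta> (- (fls_X_inv ^ nat k * \<beta>)) (- \<beta>)"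
          by simp_all
        then show ?thesis unfolding markov_spectrum_def
          by (intro CollectI exI[of _ \<beta>] exI[of _ "- (fls_X_inv ^ nat k * \<beta>)"] exI[of _ "- \<beta>"]) simp
      qed
    qed
  qed
  show ?thesis using L M by simp
qed


end
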